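(* Let $K$ be a triangle and $k\ge1$ an integer. Let $V(K)=\mathcal P_k(K)$, $\bm W(K)=[\mathcal P_k(K)]^2$, and $\bm M(\partial K)=\{\bm\mu:\bm\mu|_F=\bm n\times p_k\text{ for some }p_k\in\mathcal P_k(F),\text{ for each edge }F\subset\partial K\}$. Then $I_M(V(K)\times\bm W(K))=0$.
   Context: $\mathcal P_k$ denotes polynomials of total degree at most $k$. Conventions in 2D: $\nabla\times\bm v=-\partial_yv_1+\partial_xv_2$, $\nabla\times p=(\partial_yp,-\partial_xp)^T$, $\bm n\times\bm v=-n_2v_1+n_1v_2$, $\bm n\times p=(n_2p,-n_1p)^T$, $\bm n\times\bm w\times\bm n:=\bm w-(\bm w\cdot\bm n)\bm n$, $\bm n$ the unit outward normal. $I_M(V(K)\times\bm W(K)):=\dim\bm M(\partial K)-\dim\{\bm n\times v|_{\partial K}:v\in V(K),\nabla\times v=\bm0\}-\dim\{\bm n\times\bm w\times\bm n|_{\partial K}:\bm w\in\bm W(K),\nabla\times\bm w=0\}$. *)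

theory Defs
  imports "HOL-Analysis.Analysis" "HOL-Library.Function_Algebras"
begin

type_synonym pt = "real^2"

definition polyk :: "nat \<Rightarrow> (pt \<Rightarrow> real) \<Rightarrow> bool" where
  "polyk k f \<longleftrightarrow> (\<exists>c :: nat \<Rightarrow> nat \<Rightarrow> real.
      \<forall>x. f x = (\<Sum>i\<le>k. \<Sum>j\<le>k - i. c i j * (x$1)^i * (x$2)^j))"

definition pdiff :: "2 \<Rightarrow> (pt \<Rightarrow> real) \<Rightarrow> pt \<Rightarrow> real" where
  "pdiff j f x = deriv (\<lambda>t. f (x + t *\<^sub>R axis j 1)) 0"

definition curl_s :: "(pt \<Rightarrow> real) \<Rightarrow> pt \<Rightarrow> pt" where
  "curl_s p x = vector [pdiff 2 p x, - pdiff 1 p x]"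

definition curl_v :: "(pt \<Rightarrow> pt) \<Rightarrow> pt \<Rightarrow> real" where
  "curl_v w x = - pdiff 2 (\<lambda>y. w y $ 1) x + pdiff 1 (\<lambda>y. w y $ 2) x"

text \<open>n x p for scalar p, and tangential part n x w x n.\<close>
definition cross_np :: "pt \<Rightarrow> real \<Rightarrow> pt" where
  "cross_np n p = vector [n$2 * p, - (n$1) * p]"

definition tang :: "pt \<Rightarrow> pt \<Rightarrow> pt" where
  "tang n w = w - (w \<bullet> n) *\<^sub>R n"

text \<open>Triangle with vertices a0 a1 a2: vertex list, edge i is opposite vertex i.\<close>
definition tri_vertex :: "pt \<Rightarrow> pt \<Rightarrow> pt \<Rightarrow> nat \<Rightarrow> pt" where
  "tri_vertex a0 a1 a2 i = (if i = 0 then a0 else if i = 1 then a1 else a2)"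

definition tri_edge :: "pt \<Rightarrow> pt \<Rightarrow> pt \<Rightarrow> nat \<Rightarrow> pt set" where
  "tri_edge a0 a1 a2 i =
     closed_segment (tri_vertex a0 a1 a2 ((i + 1) mod 3)) (tri_vertex a0 a1 a2 ((i + 2) mod 3))"

definition tri_normal :: "pt \<Rightarrow> pt \<Rightarrow> pt \<Rightarrow> nat \<Rightarrow> pt" where
  "tri_normal a0 a1 a2 i =
     (let p = tri_vertex a0 a1 a2 ((i + 1) mod 3);
          q = tri_vertex a0 a1 a2 ((i + 2) mod 3);
          r = tri_vertex a0 a1 a2 i;
          t = q - p;
          m = (1 / norm t) *\<^sub>R vector [t$2, - (t$1)]
      in if (r - p) \<bullet> m > 0 then - m else m)"

text \<open>Functions on the boundary are represented edge-wise: mu i x for edge i < 3 and x on edge i,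
  and 0 elsewhere.\<close>
type_synonym bfun = "nat \<Rightarrow> pt \<Rightarrow> pt"

definition bscale :: "real \<Rightarrow> bfun \<Rightarrow> bfun" where
  "bscale c f = (\<lambda>i x. c *\<^sub>R f i x)"

definition bdim :: "bfun set \<Rightarrow> nat" where
  "bdim S = vector_space.dim bscale S"

definition on_bdry :: "pt \<Rightarrow> pt \<Rightarrow> pt \<Rightarrow> (nat \<Rightarrow> pt \<Rightarrow> pt) \<Rightarrow> bfun" where
  "on_bdry a0 a1 a2 g = (\<lambda>i x. if i < 3 \<and> x \<in> tri_edge a0 a1 a2 i then g i x else 0)"

definition Mspace :: "nat \<Rightarrow> pt \<Rightarrow> pt \<Rightarrow> pt \<Rightarrow> bfun set" where
  "Mspace k a0 a1 a2 = {mu. \<exists>p :: nat \<Rightarrow> pt \<Rightarrow> real. (\<forall>i<3. polyk k (p i)) \<and>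
      mu = on_bdry a0 a1 a2 (\<lambda>i x. cross_np (tri_normal a0 a1 a2 i) (p i x))}"

definition Vtrace :: "nat \<Rightarrow> pt \<Rightarrow> pt \<Rightarrow> pt \<Rightarrow> bfun set" where
  "Vtrace k a0 a1 a2 = (\<lambda>v. on_bdry a0 a1 a2 (\<lambda>i x. cross_np (tri_normal a0 a1 a2 i) (v x))) `
      {v. polyk k v \<and> (\<forall>x\<in>convex hull {a0, a1, a2}. curl_s v x = 0)}"

definition Wtrace :: "nat \<Rightarrow> pt \<Rightarrow> pt \<Rightarrow> pt \<Rightarrow> bfun set" where
  "Wtrace k a0 a1 a2 = (\<lambda>w. on_bdry a0 a1 a2 (\<lambda>i x. tang (tri_normal a0 a1 a2 i) (w x))) `
      {w. polyk k (\<lambda>x. w x $ 1) \<and> polyk k (\<lambda>x. w x $ 2) \<and>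
          (\<forall>x\<in>convex hull {a0, a1, a2}. curl_v w x = 0)}"

definition I_M :: "nat \<Rightarrow> pt \<Rightarrow> pt \<Rightarrow> pt \<Rightarrow> int" where
  "I_M k a0 a1 a2 = int (bdim (Mspace k a0 a1 a2)) - int (bdim (Vtrace k a0 a1 a2))
      - int (bdim (Wtrace k a0 a1 a2))"

end

theory Submission
  imports Defs "HOL-Computational_Algebra.Polynomial"
begin

definition vanish :: "nat \<Rightarrow> (nat \<Rightarrow> nat \<Rightarrow> real) \<Rightarrow> bool" where
  "vanish k c \<longleftrightarrow> (\<forall>i j. k < i + j \<longrightarrow> c i j = 0)"

definition pv :: "(nat \<Rightarrow> nat \<Rightarrow> real) \<Rightarrow> nat \<Rightarrow> pt \<Rightarrow> real" where
  "pv c N x = (\<Sum>i\<le>N. \<Sum>j\<le>N. c i j * (x$1)^i * (x$2)^j)"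

definition d1 :: "(nat \<Rightarrow> nat \<Rightarrow> real) \<Rightarrow> nat \<Rightarrow> nat \<Rightarrow> real" where
  "d1 c i j = real (Suc i) * c (Suc i) j"
definition d2 :: "(nat \<Rightarrow> nat \<Rightarrow> real) \<Rightarrow> nat \<Rightarrow> nat \<Rightarrow> real" where
  "d2 c i j = real (Suc j) * c i (Suc j)"

lemma tri_sq_sum:
  assumes "vanish k c" "i \<le> k"
  shows "(\<Sum>j\<le>k - i. c i j * m j) = (\<Sum>j\<le>k. c i j * m j)"
  by (rule sum.mono_neutral_left) (use assms in \<open>auto simp: vanish_def\<close>)

lemma polyk_iff: "polyk k f \<longleftrightarrow> (\<exists>c. vanish k c \<and> (\<forall>x. f x = pv c k x))"
proof
  assume "polyk k f"
  then obtain c where c: "\<forall>x. f x = (\<Sum>i\<le>k. \<Sum>j\<le>k - i. c i j * (x$1)^i * (x$2)^j)"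
    unfolding polyk_def by blast
  define c' where "c' i j = (if i + j \<le> k then c i j else 0)" for i j
  have v: "vanish k c'" by (auto simp: vanish_def c'_def)
  have "f x = pv c' k x" for x
  proof -
    have "f x = (\<Sum>i\<le>k. \<Sum>j\<le>k - i. c i j * ((x$1)^i * (x$2)^j))"
      using c by (simp add: mult.assoc)
    also have "\<dots> = (\<Sum>i\<le>k. \<Sum>j\<le>k - i. c' i j * ((x$1)^i * (x$2)^j))"
      by (intro sum.cong refl) (auto simp: c'_def)
    also have "\<dots> = (\<Sum>i\<le>k. \<Sum>j\<le>k. c' i j * ((x$1)^i * (x$2)^j))"
      by (intro sum.cong refl tri_sq_sum[OF v]) auto
    finally show ?thesis by (simp add: pv_def mult.assoc)
  qed
  with v show "\<exists>c. vanish k c \<and> (\<forall>x. f x = pv c k x)" by blast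
next
  assume "\<exists>c. vanish k c \<and> (\<forall>x. f x = pv c k x)"
  then obtain c where v: "vanish k c" and c: "\<forall>x. f x = pv c k x" by blast
  have "f x = (\<Sum>i\<le>k. \<Sum>j\<le>k - i. c i j * (x$1)^i * (x$2)^j)" for x
  proof -
    have "f x = (\<Sum>i\<le>k. \<Sum>j\<le>k. c i j * ((x$1)^i * (x$2)^j))"
      by (simp add: c pv_def mult.assoc)
    also have "\<dots> = (\<Sum>i\<le>k. \<Sum>j\<le>k - i. c i j * ((x$1)^i * (x$2)^j))"
      by (intro sum.cong refl tri_sq_sum[OF v, symmetric]) auto
    finally show ?thesis by (simp add: mult.assoc)
  qed
  then show "polyk k f" unfolding polyk_def by blast
qed

lemma pv_mono:
  assumes "vanish k c" "k \<le> N"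
  shows "pv c N x = pv c k x"
proof -
  have "pv c N x = (\<Sum>i\<le>N. \<Sum>j\<le>k. c i j * (x$1)^i * (x$2)^j)"
    unfolding pv_def
    by (intro sum.cong refl sum.mono_neutral_right) (use assms in \<open>auto simp: vanish_def\<close>)
  also have "\<dots> = pv c k x"
    unfolding pv_def
    by (intro sum.mono_neutral_right) (use assms in \<open>auto simp: vanish_def\<close>)
  finally show ?thesis .
qed

lemma vanish_mono: "vanish k c \<Longrightarrow> k \<le> m \<Longrightarrow> vanish m c"
  by (auto simp: vanish_def)

lemma shift_sum:
  fixes g :: "nat \<Rightarrow> 'a::comm_monoid_add"
  assumes "g 0 = 0" "g (Suc N) = 0"
  shows "(\<Sum>i\<le>N. g (Suc i)) = (\<Sum>i\<le>N. g i)"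
proof -
  have "(\<Sum>i\<le>Suc N. g i) = g 0 + (\<Sum>i\<le>N. g (Suc i))" by (rule sum.atMost_Suc_shift)
  moreover have "(\<Sum>i\<le>Suc N. g i) = (\<Sum>i\<le>N. g i) + g (Suc N)" by simp
  ultimately show ?thesis using assms by simp
qed

lemma mono_deriv:
  "((\<lambda>x::pt. (x$1)^i * (x$2)^j) has_derivative
     (\<lambda>h. real i * (x$1)^(i-1) * h$1 * (x$2)^j + (x$1)^i * (real j * (x$2)^(j-1) * h$2))) (at x)"
proof -
  have "((\<lambda>x::pt. x$k) has_derivative (\<lambda>h. h$k)) (at x)" for k
    by (rule bounded_linear_imp_has_derivative) (rule bounded_linear_vec_nth)
  then show ?thesis
    by (auto intro!: derivative_eq_intros simp: algebra_simps)
qed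

lemma pv_deriv_raw:
  "(pv c N has_derivative
     (\<lambda>h. (\<Sum>i\<le>N. \<Sum>j\<le>N. c i j * (real i * (x$1)^(i-1) * h$1 * (x$2)^j + (x$1)^i * (real j * (x$2)^(j-1) * h$2))))) (at x)"
proof -
  have e: "pv c N = (\<lambda>x. \<Sum>i\<le>N. \<Sum>j\<le>N. c i j * ((x$1)^i * (x$2)^j))"
    by (auto simp: pv_def mult.assoc fun_eq_iff)
  show ?thesis unfolding e
    by (intro has_derivative_sum has_derivative_mult_right mono_deriv)
qed

lemma pv_deriv:
  assumes "vanish N c"
  shows "(pv c N has_derivative (\<lambda>h. pv (d1 c) N x * h$1 + pv (d2 c) N x * h$2)) (at x)"
proof -
  have A: "(\<Sum>i\<le>N. \<Sum>j\<le>N. c i j * (real i * (x$1)^(i-1) * (x$2)^j)) = pv (d1 c) N x"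
  proof -
    have "(\<Sum>i\<le>N. \<Sum>j\<le>N. c i j * (real i * (x$1)^(i-1) * (x$2)^j))
        = (\<Sum>j\<le>N. \<Sum>i\<le>N. c i j * (real i * (x$1)^(i-1) * (x$2)^j))"
      by (rule sum.swap)
    also have "\<dots> = (\<Sum>j\<le>N. \<Sum>i\<le>N. c (Suc i) j * (real (Suc i) * (x$1)^i * (x$2)^j))"
    proof (rule sum.cong[OF refl])
      fix j assume "j \<in> {..N}"
      show "(\<Sum>i\<le>N. c i j * (real i * x$1^(i-1) * x$2^j)) = (\<Sum>i\<le>N. c (Suc i) j * (real (Suc i) * x$1^i * x$2^j))"
        using shift_sum[of "\<lambda>i. c i j * (real i * x$1^(i-1) * x$2^j)" N] assms by (simp add: vanish_def)
    qed
    also have "\<dots> = pv (d1 c) N x"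
      unfolding pv_def d1_def by (subst sum.swap) (auto intro!: sum.cong simp: algebra_simps)
    finally show ?thesis .
  qed
  have B: "(\<Sum>i\<le>N. \<Sum>j\<le>N. c i j * ((x$1)^i * (real j * (x$2)^(j-1)))) = pv (d2 c) N x"
  proof -
    have "(\<Sum>i\<le>N. \<Sum>j\<le>N. c i j * ((x$1)^i * (real j * (x$2)^(j-1))))
        = (\<Sum>i\<le>N. \<Sum>j\<le>N. c i (Suc j) * ((x$1)^i * (real (Suc j) * (x$2)^j)))"
    proof (rule sum.cong[OF refl])
      fix i assume "i \<in> {..N}"
      show "(\<Sum>j\<le>N. c i j * ((x$1)^i * (real j * (x$2)^(j-1)))) = (\<Sum>j\<le>N. c i (Suc j) * ((x$1)^i * (real (Suc j) * (x$2)^j)))"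
        using shift_sum[of "\<lambda>j. c i j * ((x$1)^i * (real j * (x$2)^(j-1)))" N] assms by (simp add: vanish_def)
    qed
    also have "\<dots> = pv (d2 c) N x"
      unfolding pv_def d2_def by (auto intro!: sum.cong simp: algebra_simps)
    finally show ?thesis .
  qed
  have eq: "(\<Sum>i\<le>N. \<Sum>j\<le>N. c i j * (real i * (x$1)^(i-1) * h$1 * (x$2)^j + (x$1)^i * (real j * (x$2)^(j-1) * h$2)))
      = pv (d1 c) N x * h$1 + pv (d2 c) N x * h$2" for h :: pt
  proof -
    have "(\<Sum>i\<le>N. \<Sum>j\<le>N. c i j * (real i * (x$1)^(i-1) * h$1 * (x$2)^j + (x$1)^i * (real j * (x$2)^(j-1) * h$2)))
      = (\<Sum>i\<le>N. \<Sum>j\<le>N. c i j * (real i * (x$1)^(i-1) * (x$2)^j)) * h$1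
        + (\<Sum>i\<le>N. \<Sum>j\<le>N. c i j * ((x$1)^i * (real j * (x$2)^(j-1)))) * h$2"
      by (simp add: sum_distrib_left sum_distrib_right sum.distrib algebra_simps)
    then show ?thesis using A B by simp
  qed
  show ?thesis using pv_deriv_raw[of c N x] by (simp only: eq)
qed

lemma vanish_d1: "vanish (Suc k) c \<Longrightarrow> vanish k (d1 c)"
  by (auto simp: vanish_def d1_def)
lemma vanish_d2: "vanish (Suc k) c \<Longrightarrow> vanish k (d2 c)"
  by (auto simp: vanish_def d2_def)
lemma vanish_d1': "vanish k c \<Longrightarrow> vanish k (d1 c)"
  by (auto simp: vanish_def d1_def)
lemma vanish_d2': "vanish k c \<Longrightarrow> vanish k (d2 c)"
  by (auto simp: vanish_def d2_def)

lemma pdiff_from_deriv: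
  assumes "(f has_derivative (\<lambda>h. g1 * h$1 + g2 * h$2)) (at x)"
  shows "pdiff 1 f x = g1" "pdiff 2 f x = g2"
proof -
  have a1: "axis (1::2) (1::real) $ 1 = 1" "axis (1::2) (1::real) $ 2 = 0"
    "axis (2::2) (1::real) $ 1 = 0" "axis (2::2) (1::real) $ 2 = 1"
    by (auto simp: axis_def)
  have "((\<lambda>t. f (x + t *\<^sub>R axis j 1)) has_real_derivative (g1 * axis j 1 $ 1 + g2 * axis j 1 $ 2)) (at 0)" for j
  proof -
    have A: "((\<lambda>t. x + t *\<^sub>R axis j 1) has_derivative (\<lambda>t. t *\<^sub>R axis j 1)) (at 0)"
      by (auto intro!: derivative_eq_intros)
    have B: "(f has_derivative (\<lambda>h. g1 * h$1 + g2 * h$2)) (at ((\<lambda>t. x + t *\<^sub>R axis j 1) 0))"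
      using assms by simp
    from diff_chain_at[OF A B]
    have "((\<lambda>t. f (x + t *\<^sub>R axis j 1)) has_derivative (\<lambda>t. g1 * (t *\<^sub>R axis j 1)$1 + g2 * (t *\<^sub>R axis j 1)$2)) (at 0)"
      by (simp add: o_def)
    moreover have "(\<lambda>t. g1 * (t *\<^sub>R axis j 1)$1 + g2 * (t *\<^sub>R axis j 1)$2) = (*) (g1 * axis j 1 $ 1 + g2 * axis j 1 $ 2)"
      by (auto simp: fun_eq_iff algebra_simps)
    ultimately show ?thesis
      by (simp add: has_field_derivative_def)
  qed
  from DERIV_imp_deriv[OF this[of 1]] DERIV_imp_deriv[OF this[of 2]]
  show "pdiff 1 f x = g1" "pdiff 2 f x = g2" by (simp_all add: pdiff_def a1)
qed

lemma pv_add: "pv (\<lambda>i j. c i j + d i j) N x = pv c N x + pv d N x"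
  by (simp add: pv_def sum.distrib algebra_simps)
lemma pv_scale: "pv (\<lambda>i j. a * c i j) N x = a * pv c N x"
  by (simp add: pv_def sum_distrib_left algebra_simps)
lemma pv_diff: "pv (\<lambda>i j. c i j - d i j) N x = pv c N x - pv d N x"
  by (simp add: pv_def sum_subtractf algebra_simps)

lemma polyk_const: "polyk k (\<lambda>x. a)"
proof -
  define c where "c i j = (if i = 0 \<and> j = 0 then a else 0)" for i j :: nat
  have "vanish k c" by (auto simp: vanish_def c_def)
  moreover have "a = pv c k x" for x
  proof -
    have "c i j * x$1^i * x$2^j = (if j = 0 then (if i = 0 then a else 0) else 0)" for i j
      by (auto simp: c_def)
    then show ?thesis unfolding pv_def by (simp only:) simp
  qed
  ultimately show ?thesis unfolding polyk_iff by blast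
qed

lemma polyk_add: "polyk k f \<Longrightarrow> polyk k g \<Longrightarrow> polyk k (\<lambda>x. f x + g x)"
  unfolding polyk_iff
proof (elim exE conjE)
  fix c d assume "vanish k c" "\<forall>x. f x = pv c k x" "vanish k d" "\<forall>x. g x = pv d k x"
  then show "\<exists>e. vanish k e \<and> (\<forall>x. f x + g x = pv e k x)"
    by (intro exI[of _ "\<lambda>i j. c i j + d i j"]) (auto simp: vanish_def pv_add)
qed

lemma polyk_scale: "polyk k f \<Longrightarrow> polyk k (\<lambda>x. a * f x)"
  unfolding polyk_iff
proof (elim exE conjE)
  fix c assume "vanish k c" "\<forall>x. f x = pv c k x"
  then show "\<exists>e. vanish k e \<and> (\<forall>x. a * f x = pv e k x)"
    by (intro exI[of _ "\<lambda>i j. a * c i j"]) (auto simp: vanish_def pv_scale)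
qed

lemma polyk_diff: "polyk k f \<Longrightarrow> polyk k g \<Longrightarrow> polyk k (\<lambda>x. f x - g x)"
  using polyk_add[of k f "\<lambda>x. (-1) * g x"] polyk_scale[of k g "-1"] by simp

lemma polyk_mono: "polyk k f \<Longrightarrow> k \<le> m \<Longrightarrow> polyk m f"
  unfolding polyk_iff
proof (elim exE conjE)
  fix c assume a: "vanish k c" "\<forall>x. f x = pv c k x" "k \<le> m"
  have "vanish m c" using vanish_mono[OF a(1) a(3)] .
  moreover have "\<forall>x. f x = pv c m x" using a(2) pv_mono[OF a(1) a(3)] by simp
  ultimately show "\<exists>e. vanish m e \<and> (\<forall>x. f x = pv e m x)" by blast
qed

lemma polyk_cong: "polyk k f \<Longrightarrow> (\<And>x. f x = g x) \<Longrightarrow> polyk k g"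
  unfolding polyk_iff by auto

lemma polyk_mult_x1: "polyk k f \<Longrightarrow> polyk (Suc k) (\<lambda>x. x$1 * f x)"
  unfolding polyk_iff
proof (elim exE conjE)
  fix c assume v: "vanish k c" and f: "\<forall>x. f x = pv c k x"
  define e where "e i j = (case i of 0 \<Rightarrow> 0 | Suc i' \<Rightarrow> c i' j)" for i j
  have ve: "vanish (Suc k) e" using v by (auto simp: vanish_def e_def split: nat.splits)
  have "x$1 * f x = pv e (Suc k) x" for x
  proof -
    let ?g = "\<lambda>i. \<Sum>j\<le>Suc k. e i j * (x$1)^i * (x$2)^j"
    have "pv e (Suc k) x = (\<Sum>i\<le>Suc k. ?g i)" by (simp add: pv_def)
    also have "\<dots> = (\<Sum>i\<le>Suc k. ?g (Suc i))"
      by (rule shift_sum[symmetric]) (use v in \<open>auto simp: e_def vanish_def\<close>)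
    also have "\<dots> = x$1 * pv c (Suc k) x"
      by (simp add: pv_def e_def sum_distrib_left algebra_simps)
    also have "\<dots> = x$1 * f x" using f pv_mono[OF v, of "Suc k"] by simp
    finally show ?thesis by simp
  qed
  with ve show "\<exists>e. vanish (Suc k) e \<and> (\<forall>x. x$1 * f x = pv e (Suc k) x)" by blast
qed

lemma polyk_mult_x2: "polyk k f \<Longrightarrow> polyk (Suc k) (\<lambda>x. x$2 * f x)"
  unfolding polyk_iff
proof (elim exE conjE)
  fix c assume v: "vanish k c" and f: "\<forall>x. f x = pv c k x"
  define e where "e i j = (case j of 0 \<Rightarrow> 0 | Suc j' \<Rightarrow> c i j')" for i j
  have ve: "vanish (Suc k) e" using v by (auto simp: vanish_def e_def split: nat.splits)
  have "x$2 * f x = pv e (Suc k) x" for x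
  proof -
    have "pv e (Suc k) x = (\<Sum>i\<le>Suc k. \<Sum>j\<le>Suc k. e i j * (x$1)^i * (x$2)^j)" by (simp add: pv_def)
    also have "\<dots> = (\<Sum>i\<le>Suc k. \<Sum>j\<le>Suc k. e i (Suc j) * (x$1)^i * (x$2)^(Suc j))"
    proof (rule sum.cong[OF refl])
      fix i assume "i \<in> {..Suc k}"
      show "(\<Sum>j\<le>Suc k. e i j * (x$1)^i * (x$2)^j) = (\<Sum>j\<le>Suc k. e i (Suc j) * (x$1)^i * (x$2)^(Suc j))"
        by (rule shift_sum[symmetric, of "\<lambda>j. e i j * (x$1)^i * (x$2)^j"]) (use v in \<open>auto simp: e_def vanish_def\<close>)
    qed
    also have "\<dots> = x$2 * pv c (Suc k) x"
      by (simp add: pv_def e_def sum_distrib_left algebra_simps)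
    also have "\<dots> = x$2 * f x" using f pv_mono[OF v, of "Suc k"] by simp
    finally show ?thesis by simp
  qed
  with ve show "\<exists>e. vanish (Suc k) e \<and> (\<forall>x. x$2 * f x = pv e (Suc k) x)" by blast
qed

lemma polyk_mult_aff:
  assumes "polyk k f" "\<And>x. L x = \<alpha> + \<beta> * x$1 + \<gamma> * x$2"
  shows "polyk (Suc k) (\<lambda>x. L x * f x)"
proof -
  have "polyk (Suc k) (\<lambda>x. \<alpha> * f x + (\<beta> * (x$1 * f x) + \<gamma> * (x$2 * f x)))"
    by (intro polyk_add polyk_scale polyk_mult_x1 polyk_mult_x2 polyk_mono[OF assms(1)]) auto
  then show ?thesis by (rule polyk_cong) (simp add: assms(2) algebra_simps)
qed

lemma polyk_aff_pow:
  assumes "polyk k f" "\<And>x. L x = \<alpha> + \<beta> * x$1 + \<gamma> * x$2"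
  shows "polyk (k + m) (\<lambda>x. L x ^ m * f x)"
proof (induction m)
  case 0 then show ?case using assms(1) by simp
next
  case (Suc m)
  have "polyk (k + Suc m) (\<lambda>x. L x * (L x ^ m * f x))" using polyk_mult_aff[OF Suc assms(2)] by simp
  then show ?case by (rule polyk_cong) simp
qed

lemma polyk_deriv:
  assumes "polyk k f"
  shows "\<exists>c. vanish k c \<and> f = pv c k \<and>
    (\<forall>x. (f has_derivative (\<lambda>h. pv (d1 c) k x * h$1 + pv (d2 c) k x * h$2)) (at x)) \<and>
    (\<forall>x. pdiff 1 f x = pv (d1 c) k x \<and> pdiff 2 f x = pv (d2 c) k x)"
proof -
  obtain c where v: "vanish k c" and f: "\<forall>x. f x = pv c k x" using assms unfolding polyk_iff by blast
  have fe: "f = pv c k" using f by auto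
  show ?thesis using v fe pv_deriv[OF v] pdiff_from_deriv[OF pv_deriv[OF v]] by blast
qed

lemma grad_poly:
  assumes "polyk (Suc k) \<phi>"
  shows "\<exists>w. polyk k (\<lambda>x. w x $ 1) \<and> polyk k (\<lambda>x. w x $ 2) \<and> (\<forall>x. curl_v w x = 0) \<and>
     (\<forall>x. (\<phi> has_derivative (\<lambda>h. w x \<bullet> h)) (at x))"
proof -
  obtain e where v: "vanish (Suc k) e" and fe: "\<phi> = pv e (Suc k)"
    using assms unfolding polyk_iff by auto
  define w where "w x = (vector [pv (d1 e) (Suc k) x, pv (d2 e) (Suc k) x] :: pt)" for x
  have w1: "(\<lambda>x. w x $ 1) = pv (d1 e) (Suc k)" and w2: "(\<lambda>x. w x $ 2) = pv (d2 e) (Suc k)"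
    by (auto simp: w_def)
  have "polyk k (\<lambda>x. w x $ 1)" unfolding w1 polyk_iff
    using vanish_d1[OF v] pv_mono[OF vanish_d1[OF v], of "Suc k"] by auto
  moreover have "polyk k (\<lambda>x. w x $ 2)" unfolding w2 polyk_iff
    using vanish_d2[OF v] pv_mono[OF vanish_d2[OF v], of "Suc k"] by auto
  moreover have "curl_v w x = 0" for x
  proof -
    have "pdiff 2 (\<lambda>y. w y $ 1) x = pv (d2 (d1 e)) (Suc k) x"
      unfolding w1 by (rule pdiff_from_deriv(2)[OF pv_deriv[OF vanish_d1'[OF v]]])
    moreover have "pdiff 1 (\<lambda>y. w y $ 2) x = pv (d1 (d2 e)) (Suc k) x"
      unfolding w2 by (rule pdiff_from_deriv(1)[OF pv_deriv[OF vanish_d2'[OF v]]])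
    moreover have "d2 (d1 e) = d1 (d2 e)" by (auto simp: fun_eq_iff d1_def d2_def)
    ultimately show ?thesis by (simp add: curl_v_def)
  qed
  moreover have "(\<phi> has_derivative (\<lambda>h. w x \<bullet> h)) (at x)" for x
  proof -
    have "(\<lambda>h. w x \<bullet> h) = (\<lambda>h. pv (d1 e) (Suc k) x * h$1 + pv (d2 e) (Suc k) x * h$2)"
      by (auto simp: fun_eq_iff inner_vec_def sum_2 w_def)
    then show ?thesis using pv_deriv[OF v, of x] fe by simp
  qed
  ultimately show ?thesis by blast
qed

lemma pv_zero_ball:
  assumes r: "r > 0" and z: "\<forall>x\<in>ball z r. pv c N x = 0"
  shows "\<forall>i\<le>N. \<forall>j\<le>N. c i j = 0"
proof -
  let ?I1 = "{z$1 - r/2 <..< z$1 + r/2}" and ?I2 = "{z$2 - r/2 <..< z$2 + r/2}"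
  have inb: "(vector [s, t] :: pt) \<in> ball z r" if "s \<in> ?I1" "t \<in> ?I2" for s t
  proof -
    have "dist z (vector [s, t]) \<le> \<bar>(z - vector [s,t]) $ 1\<bar> + \<bar>(z - vector [s,t]) $ 2\<bar>"
      using norm_le_l1_cart[of "z - vector [s,t]"] by (simp add: dist_norm sum_2)
    also have "\<dots> < r" using that by auto
    finally show ?thesis by simp
  qed
  have ev: "pv c N (vector [s, t]) = (\<Sum>i\<le>N. (\<Sum>j\<le>N. c i j * t^j) * s^i)" for s t
    unfolding pv_def
  proof (rule sum.cong[OF refl])
    fix i assume "i \<in> {..N}"
    show "(\<Sum>j\<le>N. c i j * (vector [s, t] :: pt) $ 1 ^ i * (vector [s, t] :: pt) $ 2 ^ j) = (\<Sum>j\<le>N. c i j * t ^ j) * s ^ i"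
      by (simp add: sum_distrib_right sum_distrib_left ac_simps)
  qed
  have A: "\<forall>i\<le>N. (\<Sum>j\<le>N. c i j * t^j) = 0" if t: "t \<in> ?I2" for t
  proof -
    have "?I1 \<subseteq> {s. (\<Sum>i\<le>N. (\<Sum>j\<le>N. c i j * t^j) * s^i) = 0}"
    proof
      fix s assume s: "s \<in> ?I1"
      have "pv c N (vector [s, t]) = 0" using z inb[OF s t] by blast
      then show "s \<in> {s. (\<Sum>i\<le>N. (\<Sum>j\<le>N. c i j * t^j) * s^i) = 0}" using ev by simp
    qed
    moreover have "infinite ?I1" using r by simp
    ultimately have "infinite {s. (\<Sum>i\<le>N. (\<Sum>j\<le>N. c i j * t^j) * s^i) = 0}"
      using finite_subset by blast
    then show ?thesis using polyfun_finite_roots[of "\<lambda>i. \<Sum>j\<le>N. c i j * t^j" N] by auto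
  qed
  show ?thesis
  proof (intro allI impI)
    fix i j assume i: "i \<le> N" and j: "j \<le> N"
    have "?I2 \<subseteq> {t. (\<Sum>j\<le>N. c i j * t^j) = 0}" using A i by auto
    moreover have "infinite ?I2" using r by simp
    ultimately have "infinite {t. (\<Sum>j\<le>N. c i j * t^j) = 0}"
      using finite_subset by blast
    then show "c i j = 0" using polyfun_finite_roots[of "\<lambda>j. c i j" N] j by auto
  qed
qed

lemma potential:
  assumes p1: "polyk k (\<lambda>x. w x $ 1)" and p2: "polyk k (\<lambda>x. w x $ 2)"
    and r: "r > 0" and cz: "\<forall>x\<in>ball z r. curl_v w x = 0"
  shows "\<exists>\<phi>. \<forall>x. (\<phi> has_derivative (\<lambda>h. w x \<bullet> h)) (at x)"
proof -
  obtain a where va: "vanish k a" and a: "(\<lambda>x. w x $ 1) = pv a k"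
    using p1 unfolding polyk_iff by auto
  obtain b where vb: "vanish k b" and b: "(\<lambda>x. w x $ 2) = pv b k"
    using p2 unfolding polyk_iff by auto
  have "curl_v w x = pv (\<lambda>i j. d1 b i j - d2 a i j) k x" for x
    unfolding curl_v_def a b pv_diff
    using pdiff_from_deriv[OF pv_deriv[OF va]] pdiff_from_deriv[OF pv_deriv[OF vb]] by simp
  with cz have "\<forall>x\<in>ball z r. pv (\<lambda>i j. d1 b i j - d2 a i j) k x = 0" by simp
  from pv_zero_ball[OF r this] have z0: "\<forall>i\<le>k. \<forall>j\<le>k. d1 b i j - d2 a i j = 0" .
  have va': "a i j = 0" if "k < i + j" for i j using va that unfolding vanish_def by blast
  have vb': "b i j = 0" if "k < i + j" for i j using vb that unfolding vanish_def by blast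
  have co: "d1 b i j = d2 a i j" for i j
  proof (cases "i \<le> k \<and> j \<le> k")
    case True then show ?thesis using z0 by simp
  next
    case False
    then have "k < Suc i + j" "k < i + Suc j" by auto
    then show ?thesis using va' vb' by (simp add: d1_def d2_def)
  qed
  define e where "e i j = (case i of Suc i' \<Rightarrow> a i' j / real (Suc i')
     | 0 \<Rightarrow> (case j of 0 \<Rightarrow> 0 | Suc j' \<Rightarrow> b 0 j' / real (Suc j')))" for i j
  have ve: "vanish (Suc k) e" unfolding vanish_def
  proof (intro allI impI)
    fix i j assume "Suc k < i + j"
    then show "e i j = 0" using va'[of "i - 1" j] vb'[of 0 "j - 1"]
      by (cases i; cases j) (auto simp: e_def)
  qed
  have de1: "d1 e = a" by (auto simp: fun_eq_iff d1_def e_def)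
  have de2: "d2 e = b"
  proof (intro ext)
    fix i j show "d2 e i j = b i j"
    proof (cases i)
      case 0 then show ?thesis by (simp add: d2_def e_def)
    next
      case (Suc i')
      have "real (Suc j) * a i' (Suc j) = real (Suc i') * b (Suc i') j"
        using co[of i' j] by (simp add: d1_def d2_def)
      then show ?thesis using Suc by (simp add: d2_def e_def field_simps)
    qed
  qed
  have "(pv e (Suc k) has_derivative (\<lambda>h. w x \<bullet> h)) (at x)" for x
  proof -
    have "w x $ 1 = pv a k x" "w x $ 2 = pv b k x" using fun_cong[OF a, of x] fun_cong[OF b, of x] by auto
    then have "(\<lambda>h. w x \<bullet> h) = (\<lambda>h. pv (d1 e) (Suc k) x * h$1 + pv (d2 e) (Suc k) x * h$2)"
      unfolding de1 de2 using pv_mono[OF va, of "Suc k" x] pv_mono[OF vb, of "Suc k" x]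
      by (simp add: fun_eq_iff inner_vec_def sum_2)
    then show ?thesis using pv_deriv[OF ve, of x] by simp
  qed
  then show ?thesis by blast
qed

definition det2 :: "pt \<Rightarrow> pt \<Rightarrow> real" where
  "det2 u v = u$1 * v$2 - u$2 * v$1"

lemma noncol_det:
  fixes a0 a1 a2 :: pt
  assumes "\<not> collinear {a0, a1, a2}"
  shows "det2 (a0 - a1) (a2 - a1) \<noteq> 0"
proof
  assume d: "det2 (a0 - a1) (a2 - a1) = 0"
  define x where "x = a0 - a1"
  define y where "y = a2 - a1"
  have d': "x$1 * y$2 = x$2 * y$1" using d by (simp add: det2_def x_def y_def)
  have "x = 0 \<or> y = 0 \<or> (\<exists>c. y = c *\<^sub>R x)"
  proof (cases "x = 0")
    case False
    show ?thesis
    proof (cases "x$1 = 0")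
      case True
      with False have x2: "x$2 \<noteq> 0" by (metis exhaust_2 vec_eq_iff zero_index)
      have "y = (y$2 / x$2) *\<^sub>R x"
        unfolding vec_eq_iff forall_2 using d' True x2 by (simp add: field_simps)
      then show ?thesis by blast
    next
      case x1: False
      have "y = (y$1 / x$1) *\<^sub>R x"
        unfolding vec_eq_iff forall_2 using d' x1 by (simp add: field_simps)
      then show ?thesis by blast
    qed
  qed simp
  then have "collinear {0, x, y}" by (simp add: collinear_lemma)
  then have "collinear {a0, a1, a2}"
    using collinear_3[of a0 a1 a2] by (simp add: x_def y_def)
  with assms show False by simp
qed

locale tri =
  fixes a0 a1 a2 :: pt
  assumes nc: "\<not> collinear {a0, a1, a2}"
begin

definition "V i = tri_vertex a0 a1 a2 i"
definition "P i = V ((i + 1) mod 3)"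
definition "Q i = V ((i + 2) mod 3)"
definition "t i = Q i - P i"
definition "nrm i = tri_normal a0 a1 a2 i"
definition "tau i = cross_np (nrm i) 1"
definition "DD = det2 (a0 - a1) (a2 - a1)"
definition "sg = (if DD > 0 then -1 else (1::real))"
definition "lam m x = det2 (x - P m) (t m) / DD"
definition "K = convex hull {a0, a1, a2}"

lemma DD_nz: "DD \<noteq> 0" using noncol_det[OF nc] by (simp add: DD_def)

lemma sg: "sg * sg = 1" "sg \<noteq> 0" by (auto simp: sg_def)

lemma distinct: "a0 \<noteq> a1" "a1 \<noteq> a2" "a0 \<noteq> a2"
  using nc by (auto simp: collinear_2 insert_commute)

lemma less3: "i < 3 \<Longrightarrow> i = 0 \<or> i = 1 \<or> i = (2::nat)" by auto

lemma cyc: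
  assumes "i < 3"
  shows "P i = V ((i+1) mod 3)" "Q i = V ((i+2) mod 3)"
    "P ((i+1) mod 3) = V ((i+2) mod 3)" "Q ((i+1) mod 3) = V i"
    "P ((i+2) mod 3) = V i" "Q ((i+2) mod 3) = V ((i+1) mod 3)"
  using less3[OF assms] by (auto simp: P_def Q_def numeral_2_eq_2)

lemma detV: assumes "i < 3" shows "det2 (V i - P i) (t i) = DD"
  using less3[OF assms]
  by (elim disjE) (simp_all add: V_def P_def Q_def t_def tri_vertex_def det2_def DD_def algebra_simps)

lemma t_nz: "i < 3 \<Longrightarrow> t i \<noteq> 0"
  using detV[of i] DD_nz by (auto simp: det2_def)

lemma norm_t_pos: "i < 3 \<Longrightarrow> norm (t i) > 0" using t_nz by simp

lemma nrm_eq: "i < 3 \<Longrightarrow> nrm i = (sg / norm (t i)) *\<^sub>R vector [t i $ 2, - (t i $ 1)]"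
proof -
  assume i: "i < 3"
  define m where "m = (1 / norm (t i)) *\<^sub>R (vector [t i $ 2, - (t i $ 1)] :: pt)"
  have nrm: "nrm i = (if (V i - P i) \<bullet> m > 0 then - m else m)"
    by (simp add: nrm_def tri_normal_def Let_def m_def V_def P_def Q_def t_def)
  have "(V i - P i) \<bullet> (vector [t i $ 2, - (t i $ 1)] :: pt) = det2 (V i - P i) (t i)"
    by (simp add: inner_vec_def sum_2 det2_def)
  then have "(V i - P i) \<bullet> m = DD / norm (t i)"
    using detV[OF i] by (simp add: m_def)
  then have "((V i - P i) \<bullet> m > 0) = (DD > 0)"
    using norm_t_pos[OF i] by (simp add: zero_less_divide_iff)
  then show ?thesis unfolding nrm by (auto simp: sg_def m_def)
qed

lemma tau_eq: "i < 3 \<Longrightarrow> tau i = (- sg / norm (t i)) *\<^sub>R t i"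
  by (simp add: tau_def cross_np_def nrm_eq vec_eq_iff forall_2)

lemma nrm_t: "i < 3 \<Longrightarrow> nrm i \<bullet> t i = 0"
  by (simp add: nrm_eq inner_vec_def sum_2 algebra_simps)

lemma norm_t_sq: "norm (t i) ^ 2 = (t i $ 1)^2 + (t i $ 2)^2"
  by (simp add: norm_eq_sqrt_inner inner_vec_def sum_2 power2_eq_square)

lemma nrm_unit: "i < 3 \<Longrightarrow> (nrm i $ 1)^2 + (nrm i $ 2)^2 = 1"
proof -
  assume i: "i < 3"
  have "(nrm i $ 1)^2 + (nrm i $ 2)^2 = (sg * sg) * ((t i $ 1)^2 + (t i $ 2)^2) / (norm (t i))^2"
    using norm_t_pos[OF i] by (simp add: nrm_eq[OF i] power2_eq_square field_simps)
  also have "\<dots> = 1" using norm_t_pos[OF i] by (simp add: sg norm_t_sq[symmetric])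
  finally show ?thesis .
qed

lemma cross_np_tau: "i < 3 \<Longrightarrow> cross_np (nrm i) p = p *\<^sub>R tau i"
  by (simp add: tau_def cross_np_def vec_eq_iff forall_2)

lemma tang_tau: "i < 3 \<Longrightarrow> tang (nrm i) w = (w \<bullet> tau i) *\<^sub>R tau i"
proof -
  assume i: "i < 3"
  have u: "(nrm i $ 1)^2 + (nrm i $ 2)^2 = 1" by (rule nrm_unit[OF i])
  show ?thesis
    unfolding tang_def tau_def cross_np_def vec_eq_iff forall_2
    apply (simp add: inner_vec_def sum_2)
    apply (intro conjI)
    using u by algebra+
qed

lemma tau_t: "i < 3 \<Longrightarrow> tau i \<bullet> t i = - sg * norm (t i)"
proof -
  assume i: "i < 3"
  have "tau i \<bullet> t i = (- sg / norm (t i)) * (t i \<bullet> t i)" by (simp add: tau_eq[OF i])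
  also have "t i \<bullet> t i = norm (t i) ^ 2" by (simp add: power2_norm_eq_inner)
  finally show ?thesis using norm_t_pos[OF i] by (simp add: power2_eq_square)
qed

lemma lam_aff: "lam m x = (- det2 (P m) (t m) / DD) + (t m $ 2 / DD) * x$1 + (- t m $ 1 / DD) * x$2"
  using DD_nz by (simp add: lam_def det2_def field_simps)

lemma lam_line: "lam m (x + s *\<^sub>R u) = lam m x + s * (det2 u (t m) / DD)"
  using DD_nz by (simp add: lam_def det2_def field_simps)

lemma lam_V: "m < 3 \<Longrightarrow> l < 3 \<Longrightarrow> lam m (V l) = (if l = m then 1 else 0)"
proof -
  assume m: "m < 3" and l: "l < 3"
  show ?thesis
  proof (cases "l = m")
    case True then show ?thesis using detV[OF m] DD_nz by (simp add: lam_def)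
  next
    case False
    then have "V l = P m \<or> V l = Q m" using less3[OF m] less3[OF l] by (auto simp: P_def Q_def numeral_2_eq_2)
    then show ?thesis using False by (auto simp: lam_def det2_def t_def)
  qed
qed

end

interpretation bs: vector_space bscale
  by unfold_locales (auto simp: bscale_def fun_eq_iff scaleR_add_right scaleR_add_left)

lemma bdim_eq: "bdim S = bs.dim S" by (simp add: bdim_def)

lemma bscale_apply: "bscale c f i x = c *\<^sub>R f i x" by (simp add: bscale_def)

context vector_space begin

lemma dim_union_direct:
  assumes G: "finite G" and A: "A \<subseteq> span G" and B: "B \<subseteq> span G"
    and I: "span A \<inter> span B = {0}"
  shows "dim (A \<union> B) = dim A + dim B"
proof -
  obtain BA where BA: "BA \<subseteq> A" "independent BA" "A \<subseteq> span BA" "card BA = dim A"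
    using basis_exists by blast
  obtain BB where BB: "BB \<subseteq> B" "independent BB" "B \<subseteq> span BB" "card BB = dim B"
    using basis_exists by blast
  have fA: "finite BA" using independent_span_bound[OF G BA(2)] BA(1) A by blast
  have fB: "finite BB" using independent_span_bound[OF G BB(2)] BB(1) B by blast
  have sA: "span BA = span A" using BA span_eq[of BA A] span_superset[of A] by blast
  have sB: "span BB = span B" using BB span_eq[of BB B] span_superset[of B] by blast
  have ind: "independent (BA \<union> C)" if "C \<subseteq> BB" for C
  proof -
    have "finite C" using that fB finite_subset by blast
    then show ?thesis using that
    proof (induction C rule: finite_induct)
      case empty then show ?case using BA(2) by simp
    next
      case (insert b C)
      have nb: "b \<notin> span (BA \<union> C)"
      proof
        assume "b \<in> span (BA \<union> C)"
        then obtain x y where xy: "b = x + y" "x \<in> span BA" "y \<in> span C"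
          unfolding span_Un by blast
        have yB: "y \<in> span BB" using xy(3) span_mono[of C BB] insert.prems by blast
        have bB: "b \<in> span BB" using insert.prems span_base by blast
        have "x = b - y" using xy by simp
        then have "x \<in> span BB" using yB bB span_diff by simp
        then have "x \<in> span A \<inter> span B" using xy(2) sA sB by simp
        then have "x = 0" using I by blast
        then have "b \<in> span C" using xy by simp
        moreover have "C \<subseteq> BB - {b}" using insert by auto
        ultimately have "b \<in> span (BB - {b})" using span_mono by blast
        then have "dependent BB" using insert.prems unfolding dependent_def by blast
        with BB(2) show False by simp
      qed
      have "independent (BA \<union> C)" using insert by simp
      from independent_insertI[OF nb this] show ?case by simp
    qed
  qed
  have indAB: "independent (BA \<union> BB)" using ind by simp
  have sp: "span (BA \<union> BB) = span (A \<union> B)"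
    unfolding span_Un sA sB ..
  have disj: "BA \<inter> BB = {}"
  proof (rule ccontr)
    assume "BA \<inter> BB \<noteq> {}"
    then obtain x where x: "x \<in> BA" "x \<in> BB" by blast
    then have "x \<in> span A \<inter> span B" using sA sB span_base by blast
    then have "x = 0" using I by blast
    with x BA(2) dependent_zero show False by blast
  qed
  have "dim (A \<union> B) = card (BA \<union> BB)" using dim_eq_card[OF sp indAB] .
  also have "\<dots> = card BA + card BB" using card_Un_disjoint[OF fA fB disj] .
  finally show ?thesis using BA(4) BB(4) by simp
qed

end

lemma sum_apply_fun: "(\<Sum>a\<in>A. f a) x = (\<Sum>a\<in>A. f a x)"
  by (induction A rule: infinite_finite_induct) auto

lemma on_bdry_cong:
  "(\<And>i x. i < 3 \<Longrightarrow> x \<in> tri_edge a0 a1 a2 i \<Longrightarrow> f i x = g i x) \<Longrightarrow> on_bdry a0 a1 a2 f = on_bdry a0 a1 a2 g"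
  by (auto simp: on_bdry_def fun_eq_iff)

lemma line_deriv:
  assumes "\<And>x. (\<phi> has_derivative (\<lambda>h. w x \<bullet> h)) (at x)"
  shows "((\<lambda>s. \<phi> (p0 + s *\<^sub>R u)) has_vector_derivative (w (p0 + s *\<^sub>R u) \<bullet> u)) (at s)"
proof -
  have A: "((\<lambda>s. p0 + s *\<^sub>R u) has_derivative (\<lambda>s. s *\<^sub>R u)) (at s)"
    by (auto intro!: derivative_eq_intros)
  have B: "(\<phi> has_derivative (\<lambda>h. w (p0 + s *\<^sub>R u) \<bullet> h)) (at ((\<lambda>s. p0 + s *\<^sub>R u) s))"
    using assms by simp
  from diff_chain_at[OF A B] show ?thesis
    by (simp add: has_vector_derivative_def o_def)
qed

lemma pdiff_const: "pdiff 1 (\<lambda>x. c) x = 0" "pdiff 2 (\<lambda>x. c) x = 0"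
proof -
  have "((\<lambda>x::pt. c) has_derivative (\<lambda>h. 0 * h$1 + 0 * h$2)) (at x)" by simp
  from pdiff_from_deriv[OF this] show "pdiff 1 (\<lambda>x. c) x = 0" "pdiff 2 (\<lambda>x. c) x = 0" by auto
qed

context tri begin

definition "Tb = on_bdry a0 a1 a2 (\<lambda>i x. tau i)"
definition "gam l s = P l + s *\<^sub>R t l"

lemma edge_eq: "tri_edge a0 a1 a2 i = closed_segment (P i) (Q i)"
  by (simp add: tri_edge_def P_def Q_def V_def)

lemma PQ_in: "P i \<in> {a0,a1,a2}" "Q i \<in> {a0,a1,a2}"
  by (auto simp: P_def Q_def V_def tri_vertex_def)

lemma edge_K: "tri_edge a0 a1 a2 i \<subseteq> K"
  unfolding edge_eq K_def segment_convex_hull by (rule hull_mono) (use PQ_in in auto)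

lemma edge_param: "x \<in> tri_edge a0 a1 a2 i \<Longrightarrow> \<exists>s\<in>{0..1}. x = gam i s"
proof -
  assume "x \<in> tri_edge a0 a1 a2 i"
  then obtain u where u: "0 \<le> u" "u \<le> 1" "x = (1 - u) *\<^sub>R P i + u *\<^sub>R Q i"
    unfolding edge_eq closed_segment_def by blast
  have "x = gam i u" using u(3) by (simp add: gam_def t_def algebra_simps)
  with u show ?thesis by (intro bexI[of _ u]) auto
qed

lemma gam_in: "s \<in> {0..1} \<Longrightarrow> gam i s \<in> tri_edge a0 a1 a2 i"
proof -
  assume s: "s \<in> {0..1}"
  have "gam i s = (1 - s) *\<^sub>R P i + s *\<^sub>R Q i" by (simp add: gam_def t_def algebra_simps)
  with s show ?thesis unfolding edge_eq closed_segment_def by auto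
qed

lemma K_ball: "\<exists>z r. r > 0 \<and> ball z r \<subseteq> K"
proof -
  have d: "a0 \<noteq> a1" "a1 \<noteq> a2" "a0 \<noteq> a2" by (rule distinct)+
  have card: "card {a0, a1, a2} = Suc (DIM(pt))" using d by simp
  have "\<not> affine_dependent {a0, a1, a2}" using nc collinear_3_eq_affine_dependent by blast
  then have "interior K \<noteq> {}" unfolding K_def using interior_convex_hull_eq_empty[OF card] by blast
  then obtain z where "z \<in> interior K" by blast
  then obtain r where r: "r > 0" "ball z r \<subseteq> interior K"
    using open_contains_ball open_interior by blast
  then have "ball z r \<subseteq> K" using interior_subset by blast
  with r show ?thesis by blast
qed

lemma Vtrace_eq: "Vtrace k a0 a1 a2 = range (\<lambda>c. bscale c Tb)"
proof
  show "Vtrace k a0 a1 a2 \<subseteq> range (\<lambda>c. bscale c Tb)"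
  proof
    fix \<mu> assume "\<mu> \<in> Vtrace k a0 a1 a2"
    then obtain v where v: "polyk k v" "\<forall>x\<in>K. curl_s v x = 0"
      and mu: "\<mu> = on_bdry a0 a1 a2 (\<lambda>i x. cross_np (nrm i) (v x))"
      unfolding Vtrace_def K_def nrm_def by blast
    obtain c where c: "vanish k c" "v = pv c k"
      "\<forall>x. (v has_derivative (\<lambda>h. pv (d1 c) k x * h$1 + pv (d2 c) k x * h$2)) (at x)"
      "\<forall>x. pdiff 1 v x = pv (d1 c) k x \<and> pdiff 2 v x = pv (d2 c) k x"
      using polyk_deriv[OF v(1)] by blast
    have "(v has_derivative (\<lambda>h. 0)) (at x within K)" if x: "x \<in> K" for x
    proof -
      have "curl_s v x = 0" using v(2) x by blast
      then have "pdiff 1 v x = 0" "pdiff 2 v x = 0"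
        by (auto simp: curl_s_def vec_eq_iff forall_2)
      then have "pv (d1 c) k x = 0" "pv (d2 c) k x = 0" using c(4) by auto
      moreover have "(v has_derivative (\<lambda>h. pv (d1 c) k x * h$1 + pv (d2 c) k x * h$2)) (at x)"
        using c(3) by blast
      ultimately have "(v has_derivative (\<lambda>h. 0)) (at x)" by simp
      then show ?thesis by (rule has_derivative_at_withinI)
    qed
    then obtain a where a: "\<forall>x\<in>K. v x = a"
      using has_derivative_zero_constant[of K v] convex_convex_hull unfolding K_def by blast
    have "\<mu> i x = bscale a Tb i x" for i x
    proof (cases "i < 3 \<and> x \<in> tri_edge a0 a1 a2 i")
      case True
      then have "v x = a" using a edge_K by blast
      then show ?thesis using True by (simp add: mu Tb_def bscale_def on_bdry_def cross_np_tau)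
    next
      case False then show ?thesis by (auto simp: mu Tb_def bscale_def on_bdry_def)
    qed
    then have "\<mu> = bscale a Tb" by (simp add: fun_eq_iff)
    then show "\<mu> \<in> range (\<lambda>c. bscale c Tb)" by blast
  qed
next
  show "range (\<lambda>c. bscale c Tb) \<subseteq> Vtrace k a0 a1 a2"
  proof
    fix \<mu> assume "\<mu> \<in> range (\<lambda>c. bscale c Tb)"
    then obtain a where mu: "\<mu> = bscale a Tb" by blast
    have "\<mu> = on_bdry a0 a1 a2 (\<lambda>i x. cross_np (nrm i) ((\<lambda>x. a) x))"
      unfolding mu Tb_def bscale_def on_bdry_def
      by (simp add: fun_eq_iff cross_np_tau)
    then have "\<mu> = on_bdry a0 a1 a2 (\<lambda>i x. cross_np (tri_normal a0 a1 a2 i) ((\<lambda>x. a) x))"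
      by (simp add: nrm_def)
    moreover have "(\<lambda>x::pt. a) \<in> {v. polyk k v \<and> (\<forall>x\<in>convex hull {a0, a1, a2}. curl_s v x = 0)}"
      by (auto simp: polyk_const curl_s_def pdiff_const vec_eq_iff forall_2)
    ultimately show "\<mu> \<in> Vtrace k a0 a1 a2" unfolding Vtrace_def by (rule image_eqI)
  qed
qed

lemma polyk_dot:
  fixes w :: "pt \<Rightarrow> pt" and u :: pt
  assumes "polyk k (\<lambda>x. w x $ 1)" "polyk k (\<lambda>x. w x $ 2)"
  shows "polyk k (\<lambda>x. w x \<bullet> u)"
proof -
  have "polyk k (\<lambda>x. u $ 1 * w x $ 1 + u $ 2 * w x $ 2)"
    by (intro polyk_add polyk_scale assms)
  then show ?thesis by (rule polyk_cong) (simp add: inner_vec_def sum_2 mult.commute)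
qed

lemma W_sub_M: "Wtrace k a0 a1 a2 \<subseteq> Mspace k a0 a1 a2"
proof
  fix \<mu> assume "\<mu> \<in> Wtrace k a0 a1 a2"
  then obtain w where w: "polyk k (\<lambda>x. w x $ 1)" "polyk k (\<lambda>x. w x $ 2)"
    and mu: "\<mu> = on_bdry a0 a1 a2 (\<lambda>i x. tang (nrm i) (w x))"
    unfolding Wtrace_def nrm_def by blast
  define p where "p i x = w x \<bullet> tau i" for i x
  have pp: "\<forall>i<3. polyk k (p i)" unfolding p_def using polyk_dot[OF w] by blast
  have me: "\<mu> = on_bdry a0 a1 a2 (\<lambda>i x. cross_np (nrm i) (p i x))"
    unfolding mu by (rule on_bdry_cong) (simp add: tang_tau cross_np_tau p_def)
  show "\<mu> \<in> Mspace k a0 a1 a2" unfolding Mspace_def mem_Collect_eq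
    by (rule exI[of _ p]) (use pp me in \<open>simp add: nrm_def\<close>)
qed

lemma V_sub_M: "Vtrace k a0 a1 a2 \<subseteq> Mspace k a0 a1 a2"
proof
  fix \<mu> assume "\<mu> \<in> Vtrace k a0 a1 a2"
  then obtain a where mu: "\<mu> = bscale a Tb" using Vtrace_eq by blast
  have pp: "\<forall>i<3. polyk k ((\<lambda>i x. a) i)" by (simp add: polyk_const)
  have me: "\<mu> = on_bdry a0 a1 a2 (\<lambda>i x. cross_np (nrm i) ((\<lambda>i x. a) i x))"
    unfolding mu Tb_def bscale_def on_bdry_def
    by (simp add: fun_eq_iff cross_np_tau)
  show "\<mu> \<in> Mspace k a0 a1 a2" unfolding Mspace_def mem_Collect_eq
    by (rule exI[of _ "\<lambda>i x. a"]) (use pp me in \<open>simp add: nrm_def\<close>)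
qed

lemma sum3: "(\<Sum>l<(3::nat). f l) = f 0 + f 1 + (f 2 :: real)"
  by (simp add: numeral_3_eq_3 numeral_2_eq_2)

definition "Pp \<mu> \<longleftrightarrow> (\<exists>F. (\<forall>l<3. \<forall>s\<in>{0..1}.
   (F l has_vector_derivative (\<mu> l (gam l s) \<bullet> t l)) (at s within {0..1})) \<and>
   (\<Sum>l<3. F l 1 - F l 0) = 0)"

lemma Pp_subspace: "bs.subspace {\<mu>. Pp \<mu>}"
proof (rule bs.subspaceI)
  show "0 \<in> {\<mu>. Pp \<mu>}" unfolding Pp_def
    by (intro CollectI exI[of _ "\<lambda>l s. 0"]) simp
next
  fix \<mu> \<nu> assume "\<mu> \<in> {\<mu>. Pp \<mu>}" "\<nu> \<in> {\<mu>. Pp \<mu>}"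
  then obtain F G where
    F: "\<forall>l<3. \<forall>s\<in>{0..1}. (F l has_vector_derivative (\<mu> l (gam l s) \<bullet> t l)) (at s within {0..1})"
      "(\<Sum>l<3. F l 1 - F l 0) = 0" and
    G: "\<forall>l<3. \<forall>s\<in>{0..1}. (G l has_vector_derivative (\<nu> l (gam l s) \<bullet> t l)) (at s within {0..1})"
      "(\<Sum>l<3. G l 1 - G l 0) = 0"
    unfolding Pp_def by auto
  have "\<forall>l<3. \<forall>s\<in>{0..1}. ((\<lambda>s. F l s + G l s) has_vector_derivative ((\<mu> + \<nu>) l (gam l s) \<bullet> t l)) (at s within {0..1})"
    using F(1) G(1) by (auto intro!: has_vector_derivative_add simp: inner_add_left)
  moreover have "(\<Sum>l<3. (F l 1 + G l 1) - (F l 0 + G l 0)) = 0"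
    using F(2) G(2) by (simp add: sum3)
  ultimately show "\<mu> + \<nu> \<in> {\<mu>. Pp \<mu>}" unfolding Pp_def
    by (intro CollectI exI[of _ "\<lambda>l s. F l s + G l s"]) simp
next
  fix c \<mu> assume "\<mu> \<in> {\<mu>. Pp \<mu>}"
  then obtain F where
    F: "\<forall>l<3. \<forall>s\<in>{0..1}. (F l has_vector_derivative (\<mu> l (gam l s) \<bullet> t l)) (at s within {0..1})"
      "(\<Sum>l<3. F l 1 - F l 0) = 0"
    unfolding Pp_def by auto
  have "\<forall>l<3. \<forall>s\<in>{0..1}. ((\<lambda>s. c * F l s) has_vector_derivative (bscale c \<mu> l (gam l s) \<bullet> t l)) (at s within {0..1})"
    using F(1) by (auto intro!: has_vector_derivative_mult_right simp: bscale_def)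
  moreover have "(\<Sum>l<3. c * F l 1 - c * F l 0) = 0"
    using F(2) by (simp add: sum3 algebra_simps) (metis distrib_left mult_zero_right)
  ultimately show "bscale c \<mu> \<in> {\<mu>. Pp \<mu>}" unfolding Pp_def
    by (intro CollectI exI[of _ "\<lambda>l s. c * F l s"]) simp
qed

lemma W_Pp: "\<mu> \<in> Wtrace k a0 a1 a2 \<Longrightarrow> Pp \<mu>"
proof -
  assume "\<mu> \<in> Wtrace k a0 a1 a2"
  then obtain w where w: "polyk k (\<lambda>x. w x $ 1)" "polyk k (\<lambda>x. w x $ 2)"
    "\<forall>x\<in>K. curl_v w x = 0"
    and mu: "\<mu> = on_bdry a0 a1 a2 (\<lambda>i x. tang (nrm i) (w x))"
    unfolding Wtrace_def nrm_def K_def by blast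
  obtain z r where zr: "r > 0" "ball z r \<subseteq> K" using K_ball by blast
  have "\<forall>x\<in>ball z r. curl_v w x = 0" using zr w(3) by blast
  from potential[OF w(1,2) zr(1) this] obtain \<phi> where
    phi: "\<And>x. (\<phi> has_derivative (\<lambda>h. w x \<bullet> h)) (at x)" by blast
  define F where "F l s = \<phi> (gam l s)" for l s
  have "(F l has_vector_derivative (\<mu> l (gam l s) \<bullet> t l)) (at s within {0..1})"
    if l: "l < 3" and s: "s \<in> {0..1}" for l s
  proof -
    have "\<mu> l (gam l s) = tang (nrm l) (w (gam l s))"
      using gam_in[OF s] l by (simp add: mu on_bdry_def)
    moreover have "t l \<bullet> nrm l = 0" "nrm l \<bullet> t l = 0" using nrm_t[OF l] by (simp_all add: inner_commute)
    ultimately have "\<mu> l (gam l s) \<bullet> t l = w (gam l s) \<bullet> t l"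
      by (simp add: tang_def inner_diff_left)
    moreover have "(F l has_vector_derivative (w (gam l s) \<bullet> t l)) (at s)"
      unfolding F_def gam_def by (rule line_deriv[OF phi])
    ultimately show ?thesis using has_vector_derivative_at_within by fastforce
  qed
  moreover have "(\<Sum>l<3. F l 1 - F l 0) = 0"
    by (simp add: sum3 F_def gam_def t_def P_def Q_def)
  ultimately show "Pp \<mu>" unfolding Pp_def by blast
qed

lemma U_pos: "norm (t 0) + norm (t 1) + norm (t 2) > 0"
proof -
  have "norm (t 0) > 0" "norm (t 1) > 0" "norm (t 2) > 0" by (rule norm_t_pos, simp)+
  then show ?thesis by linarith
qed

lemma Tb_Pp: "Pp (bscale c Tb) \<Longrightarrow> c = 0"
proof -
  assume "Pp (bscale c Tb)"
  then obtain F where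
    F: "\<forall>l<3. \<forall>s\<in>{0..1}. (F l has_vector_derivative (bscale c Tb l (gam l s) \<bullet> t l)) (at s within {0..1})"
      "(\<Sum>l<3. F l 1 - F l 0) = 0"
    unfolding Pp_def by auto
  have inc: "F l 1 - F l 0 = - c * sg * norm (t l)" if l: "l < 3" for l
  proof -
    have "bscale c Tb l (gam l s) \<bullet> t l = - c * sg * norm (t l)" if "s \<in> {0..1}" for s
      using gam_in[OF that] l tau_t[OF l] by (simp add: bscale_def Tb_def on_bdry_def)
    then have der: "\<forall>s\<in>{0..1}. (F l has_vector_derivative (- c * sg * norm (t l))) (at s within {0..1})"
      using F(1) l by auto
    define \<kappa> where "\<kappa> = - c * sg * norm (t l)"
    have "((\<lambda>_. \<kappa>) has_integral (F l 1 - F l 0)) {0..1::real}"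
      using fundamental_theorem_of_calculus[of 0 1 "F l" "\<lambda>_. \<kappa>"] der by (auto simp: \<kappa>_def)
    moreover have "((\<lambda>_. \<kappa>) has_integral \<kappa>) {0..1::real}"
      using has_integral_const_real[of \<kappa> 0 "1::real"] by simp
    ultimately have "F l 1 - F l 0 = \<kappa>" using has_integral_unique by blast
    then show ?thesis by (simp add: \<kappa>_def)
  qed
  have "0 = (\<Sum>l<3. F l 1 - F l 0)" using F(2) by simp
  also have "\<dots> = - c * sg * (norm (t 0) + norm (t 1) + norm (t 2))"
    by (simp add: sum3 inc algebra_simps)
  finally show "c = 0" using U_pos sg by simp
qed

lemma inter0: "bs.span (Vtrace k a0 a1 a2) \<inter> bs.span (Wtrace k a0 a1 a2) = {0}"
proof -
  have sV: "bs.span (Vtrace k a0 a1 a2) = range (\<lambda>c. bscale c Tb)"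
  proof -
    have T: "Tb \<in> range (\<lambda>c. bscale c Tb)" by (rule range_eqI[of _ _ 1]) (simp add: bscale_def)
    have "bs.span (Vtrace k a0 a1 a2) = bs.span {Tb}"
      unfolding Vtrace_eq bs.span_eq
      using T by (auto simp: bs.span_singleton intro: bs.span_base)
    then show ?thesis by (simp add: bs.span_singleton)
  qed
  have sW: "bs.span (Wtrace k a0 a1 a2) \<subseteq> {\<mu>. Pp \<mu>}"
    by (rule bs.span_minimal[OF _ Pp_subspace]) (auto intro: W_Pp)
  show ?thesis
  proof
    show "bs.span (Vtrace k a0 a1 a2) \<inter> bs.span (Wtrace k a0 a1 a2) \<subseteq> {0}"
    proof
      fix \<mu> assume m: "\<mu> \<in> bs.span (Vtrace k a0 a1 a2) \<inter> bs.span (Wtrace k a0 a1 a2)"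
      then obtain c where c: "\<mu> = bscale c Tb" using sV by auto
      have "Pp \<mu>" using m sW by auto
      then have "c = 0" using c Tb_Pp by simp
      then show "\<mu> \<in> {0}" using c by (simp add: bscale_def fun_eq_iff)
    qed
  qed (auto intro: bs.span_zero)
qed

end

lemma poly_on_line:
  assumes "polyk k p"
  shows "\<exists>q. degree q \<le> k \<and> (\<forall>s. p (x0 + s *\<^sub>R u) = poly q s)"
proof -
  obtain c where v: "vanish k c" and pe: "\<forall>x. p x = pv c k x" using assms unfolding polyk_iff by blast
  define q where "q = (\<Sum>i\<le>k. \<Sum>j\<le>k. smult (c i j) ([:x0$1, u$1:]^i * [:x0$2, u$2:]^j))"
  have "degree q \<le> k" unfolding q_def
  proof (intro degree_sum_le finite_atMost)
    fix i j assume "i \<in> {..k}" "j \<in> {..k}"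
    show "degree (smult (c i j) ([:x0$1, u$1:]^i * [:x0$2, u$2:]^j)) \<le> k"
    proof (cases "c i j = 0")
      case True then show ?thesis by simp
    next
      case False
      then have ij: "i + j \<le> k" using v unfolding vanish_def by (meson not_le)
      have "degree (smult (c i j) ([:x0$1, u$1:]^i * [:x0$2, u$2:]^j)) \<le> degree ([:x0$1, u$1:]^i) + degree ([:x0$2, u$2:]^j)"
        by (rule order_trans[OF degree_smult_le degree_mult_le])
      also have "\<dots> \<le> degree [:x0$1, u$1:] * i + degree [:x0$2, u$2:] * j"
        by (intro add_mono degree_power_le)
      also have "\<dots> \<le> 1 * i + 1 * j"
        by (intro add_mono mult_right_mono) auto
      finally show ?thesis using ij by simp
    qed
  qed
  moreover have "p (x0 + s *\<^sub>R u) = poly q s" for s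
    by (simp add: pe pv_def q_def poly_sum algebra_simps)
  ultimately show ?thesis by blast
qed

lemma poly_sum_k:
  fixes q :: "real poly"
  assumes "degree q \<le> k"
  shows "poly q s = (\<Sum>j\<le>k. coeff q j * s ^ j)"
proof -
  have "poly q s = (\<Sum>j\<le>degree q. coeff q j * s ^ j)" by (rule poly_altdef)
  also have "\<dots> = (\<Sum>j\<le>k. coeff q j * s ^ j)"
    by (rule sum.mono_neutral_left) (use assms in \<open>auto simp: coeff_eq_0\<close>)
  finally show ?thesis .
qed

lemma polyk_sum:
  assumes "\<And>m. m \<in> A \<Longrightarrow> polyk k (f m)"
  shows "polyk k (\<lambda>x. \<Sum>m\<in>A. f m x)"
proof (cases "finite A")
  case True
  then show ?thesis using assms
  proof (induction A rule: finite_induct)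
    case empty then show ?case using polyk_const[of k 0] by simp
  next
    case (insert a A)
    then show ?case by (simp add: polyk_add)
  qed
next
  case False then show ?thesis using polyk_const[of k 0] by simp
qed

context tri begin

lemma lam_gam: "lam m (gam l s) = (1 - s) * lam m (P l) + s * lam m (Q l)"
proof -
  have "Q l = P l + 1 *\<^sub>R t l" by (simp add: t_def)
  then have "lam m (Q l) = lam m (P l) + det2 (t l) (t m) / DD" using lam_line[of m "P l" 1 "t l"] by simp
  moreover have "lam m (gam l s) = lam m (P l) + s * (det2 (t l) (t m) / DD)"
    unfolding gam_def by (rule lam_line)
  ultimately show ?thesis by (simp add: algebra_simps)
qed

definition i1 :: "nat \<Rightarrow> nat" where "i1 i = (i + 1) mod 3"
definition i2 :: "nat \<Rightarrow> nat" where "i2 i = (i + 2) mod 3"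

lemma idx: assumes "i < 3" shows "i1 i < 3 \<and> i2 i < 3 \<and> i \<noteq> i1 i \<and> i \<noteq> i2 i \<and> i1 i \<noteq> i2 i"
  using less3[OF assms] by (auto simp: i1_def i2_def)

lemma idx_cases: assumes "i < 3" "l < 3" shows "l = i \<or> l = i1 i \<or> l = i2 i"
  using less3[OF assms(1)] less3[OF assms(2)] by (auto simp: i1_def i2_def)

lemma lam_edge: "i < 3 \<Longrightarrow> lam (i2 i) (gam i s) = s"
  using cyc[of i] idx[of i] by (simp add: lam_gam lam_V i1_def i2_def)

definition "Eg i j = on_bdry a0 a1 a2 (\<lambda>l x. if l = i then (lam (i2 i) x ^ j) *\<^sub>R tau i else 0)"

lemma M_span: "Mspace k a0 a1 a2 \<subseteq> bs.span ((\<lambda>(i, j). Eg i j) ` ({..<3} \<times> {..k}))"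
proof
  fix \<mu> assume "\<mu> \<in> Mspace k a0 a1 a2"
  then obtain p where p: "\<forall>i<3. polyk k (p i)"
    and mu: "\<mu> = on_bdry a0 a1 a2 (\<lambda>i x. cross_np (nrm i) (p i x))"
    unfolding Mspace_def nrm_def by blast
  have "\<forall>i. \<exists>q. i < 3 \<longrightarrow> degree q \<le> k \<and> (\<forall>s. p i (gam i s) = poly q s)"
    using p poly_on_line unfolding gam_def by blast
  then obtain q where q: "\<And>i. i < 3 \<Longrightarrow> degree (q i) \<le> k \<and> (\<forall>s. p i (gam i s) = poly (q i) s)"
    by metis
  define R where "R = (\<Sum>i<3. \<Sum>j\<le>k. bscale (coeff (q i) j) (Eg i j))"
  have gen: "Eg i j \<in> (\<lambda>(i, j). Eg i j) ` ({..<3} \<times> {..k})" if "i < 3" "j \<le> k" for i j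
    using that by (intro rev_image_eqI[of "(i, j)"]) auto
  have "\<mu> l x = R l x" for l x
  proof (cases "l < 3 \<and> x \<in> tri_edge a0 a1 a2 l")
    case True
    then have l: "l < 3" and x: "x \<in> tri_edge a0 a1 a2 l" by auto
    obtain s where s: "s \<in> {0..1}" "x = gam l s" using edge_param[OF x] by blast
    have "R l x = (\<Sum>i<3. \<Sum>j\<le>k. coeff (q i) j *\<^sub>R Eg i j l x)"
      by (simp add: R_def sum_apply_fun bscale_def)
    also have "\<dots> = (\<Sum>i<3. if i = l then (\<Sum>j\<le>k. coeff (q l) j *\<^sub>R (lam (i2 l) x ^ j *\<^sub>R tau l)) else 0)"
      by (intro sum.cong refl) (use True in \<open>auto simp: Eg_def on_bdry_def\<close>)
    also have "\<dots> = (\<Sum>j\<le>k. coeff (q l) j *\<^sub>R (lam (i2 l) x ^ j *\<^sub>R tau l))"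
      using l by simp
    also have "\<dots> = (\<Sum>j\<le>k. coeff (q l) j * s ^ j) *\<^sub>R tau l"
      using s lam_edge[OF l] by (simp add: scaleR_sum_left)
    also have "\<dots> = p l x *\<^sub>R tau l"
      using q[OF l] s poly_sum_k[of "q l" k s] by simp
    also have "\<dots> = \<mu> l x" using True by (simp add: mu on_bdry_def cross_np_tau)
    finally show ?thesis by simp
  next
    case False
    then show ?thesis by (auto simp: mu R_def sum_apply_fun bscale_def Eg_def on_bdry_def)
  qed
  then have "\<mu> = R" by (simp add: fun_eq_iff)
  also have "R \<in> bs.span ((\<lambda>(i, j). Eg i j) ` ({..<3} \<times> {..k}))"
    unfolding R_def
    by (intro bs.span_sum bs.span_scale bs.span_base gen) auto
  finally show "\<mu> \<in> bs.span ((\<lambda>(i, j). Eg i j) ` ({..<3} \<times> {..k}))" .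
qed

lemma polyk_lam: "polyk 1 (lam m)"
proof -
  have "polyk (Suc 0) (\<lambda>x. lam m x * 1)"
    by (rule polyk_mult_aff[OF polyk_const lam_aff])
  then show ?thesis by simp
qed

lemma Eg_span:
  assumes i: "i < 3" and j: "j \<le> k"
  shows "Eg i j \<in> bs.span (Vtrace k a0 a1 a2 \<union> Wtrace k a0 a1 a2)"
proof -
  define ia where "ia = i1 i"
  define ib where "ib = i2 i"
  have ix: "ia < 3" "ib < 3" "i \<noteq> ia" "i \<noteq> ib" "ia \<noteq> ib"
    using idx[OF i] by (auto simp: ia_def ib_def)
  have vs: "P i = V ia" "Q i = V ib" "P ia = V ib" "Q ia = V i" "P ib = V i" "Q ib = V ia"
    using cyc[OF i] by (auto simp: ia_def ib_def i1_def i2_def)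
  define u where "u l = norm (t l)" for l
  have upos: "u l > 0" if "l < 3" for l using norm_t_pos[OF that] by (simp add: u_def)
  define U where "U = u i + u ia + u ib"
  have Upos: "U > 0" using upos[OF i] upos[OF ix(1)] upos[OF ix(2)] by (simp add: U_def)
  define q where "q = u i / real (Suc j)"
  define A where "A = - sg * q"
  define c where "c = q / U"
  have cU: "q = c * U" using Upos by (simp add: c_def)
  define C where "C = sg * c * u i"
  define B where "B = - sg * c * u ib"
  define \<psi> where "\<psi> x = lam ib x - (\<Sum>m<j. lam ib x ^ m * (lam ia x * lam ib x))" for x
  define \<phi> where "\<phi> x = A * \<psi> x + B * lam i x + C * lam ib x" for x
  have p2: "polyk 2 (\<lambda>x. lam ia x * lam ib x)"
  proof -
    have "polyk (Suc 1) (\<lambda>x. lam ib x * lam ia x)"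
      by (rule polyk_mult_aff[OF polyk_lam lam_aff])
    then have "polyk 2 (\<lambda>x. lam ib x * lam ia x)" by (simp add: numeral_2_eq_2)
    then show ?thesis by (rule polyk_cong) simp
  qed
  have "polyk (Suc j) \<psi>"
    unfolding \<psi>_def
  proof (rule polyk_diff)
    show "polyk (Suc j) (lam ib)" by (rule polyk_mono[OF polyk_lam]) simp
    show "polyk (Suc j) (\<lambda>x. \<Sum>m<j. lam ib x ^ m * (lam ia x * lam ib x))"
    proof (rule polyk_sum)
      fix m assume "m \<in> {..<j}"
      then have "2 + m \<le> Suc j" by simp
      with polyk_aff_pow[OF p2 lam_aff[of ib], where m=m] show "polyk (Suc j) (\<lambda>x. lam ib x ^ m * (lam ia x * lam ib x))"
        by (rule polyk_mono)
    qed
  qed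
  then have "polyk (Suc k) \<phi>" unfolding \<phi>_def
    using j by (intro polyk_add polyk_scale polyk_mono[OF polyk_lam]) (auto elim: polyk_mono)
  from grad_poly[OF this] obtain w where
    w: "polyk k (\<lambda>x. w x $ 1)" "polyk k (\<lambda>x. w x $ 2)" "\<forall>x. curl_v w x = 0"
      "\<forall>x. (\<phi> has_derivative (\<lambda>h. w x \<bullet> h)) (at x)" by blast
  define Wt where "Wt = on_bdry a0 a1 a2 (\<lambda>l x. tang (nrm l) (w x))"
  have WtW: "Wt \<in> Wtrace k a0 a1 a2"
    unfolding Wtrace_def Wt_def nrm_def by (rule image_eqI[OF refl]) (use w in auto)
  have TV: "bscale c Tb \<in> Vtrace k a0 a1 a2" using Vtrace_eq by auto
  have Dl: "((\<lambda>s. \<phi> (gam l s)) has_real_derivative (w (gam l s) \<bullet> t l)) (at s)" for l s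
    unfolding has_real_derivative_iff_has_vector_derivative gam_def
    by (rule line_deriv) (use w(4) in blast)
  have geo: "(\<Sum>m<j. s ^ m * ((1 - s) * s)) = s - s ^ Suc j" for s :: real
  proof -
    have "(\<Sum>m<j. s ^ m * ((1 - s) * s)) = ((1 - s) * (\<Sum>m<j. s ^ m)) * s"
      by (simp add: sum_distrib_right sum_distrib_left algebra_simps)
    also have "\<dots> = (1 - s ^ j) * s" by (simp add: one_diff_power_eq)
    finally show ?thesis by (simp add: algebra_simps)
  qed
  have lv: "lam i (V i) = 1" "lam i (V ia) = 0" "lam i (V ib) = 0"
    "lam ia (V i) = 0" "lam ia (V ia) = 1" "lam ia (V ib) = 0"
    "lam ib (V i) = 0" "lam ib (V ia) = 0" "lam ib (V ib) = 1"
    using ix i by (simp_all add: lam_V)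
  have key: "Eg i j l x = (bscale c Tb + Wt) l x" for l x
  proof (cases "l < 3 \<and> x \<in> tri_edge a0 a1 a2 l")
    case False then show ?thesis by (auto simp: Eg_def Tb_def Wt_def bscale_def on_bdry_def)
  next
    case True
    then have l: "l < 3" and x: "x \<in> tri_edge a0 a1 a2 l" by auto
    obtain s where s: "s \<in> {0..1}" "x = gam l s" using edge_param[OF x] by blast
    have rhs: "(bscale c Tb + Wt) l x = (c + (- sg / u l) * (w x \<bullet> t l)) *\<^sub>R tau l"
      using True by (simp add: Tb_def Wt_def bscale_def on_bdry_def tang_tau[OF l] tau_eq[OF l] u_def
          algebra_simps)
    consider "l = i" | "l = ia" | "l = ib" using idx_cases[OF i l] by (auto simp: ia_def ib_def)
    then show ?thesis
    proof cases
      case 1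
      have g: "\<phi> (gam i r) = A * r ^ Suc j + C * r" for r
      proof -
        have L: "lam i (gam i r) = 0" "lam ia (gam i r) = 1 - r" "lam ib (gam i r) = r"
          by (simp_all add: lam_gam vs lv)
        show ?thesis by (simp only: \<phi>_def \<psi>_def L geo) (simp add: algebra_simps)
      qed
      have pw: "((\<lambda>r. r ^ Suc j) has_real_derivative real (Suc j) * s ^ j) (at s)"
        using DERIV_pow[of "Suc j" s] by simp
      have "((\<lambda>r. A * r ^ Suc j + C * r) has_real_derivative (A * (real (Suc j) * s ^ j) + C * 1)) (at s)"
        by (rule DERIV_add[OF DERIV_cmult[OF pw] DERIV_cmult[OF DERIV_ident]])
      then have "((\<lambda>r. A * r ^ Suc j + C * r) has_real_derivative (A * (real (Suc j) * s ^ j) + C)) (at s)"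
        by simp
      moreover have "((\<lambda>r. A * r ^ Suc j + C * r) has_real_derivative (w (gam i s) \<bullet> t i)) (at s)"
        using Dl[of i s] by (simp add: g)
      ultimately have wt: "w x \<bullet> t l = A * (real (Suc j) * s ^ j) + C"
        using s 1 DERIV_unique by blast
      have le: "lam ib x = s" using lam_edge[OF i] s 1 by (simp add: ib_def)
      have e1: "A * real (Suc j) = - sg * u i" by (simp add: A_def q_def)
      have "A * (real (Suc j) * s ^ j) + C = (A * real (Suc j)) * s ^ j + C"
        by (simp only: mult.assoc)
      also have "\<dots> = sg * u i * (c - s ^ j)"
        unfolding e1 by (simp add: C_def algebra_simps)
      finally have eA: "A * (real (Suc j) * s ^ j) + C = sg * u i * (c - s ^ j)" .
      have "(- sg / u l) * (w x \<bullet> t l) = (- sg / u i) * (sg * u i * (c - s ^ j))"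
        using wt 1 eA by simp
      also have "\<dots> = - (sg * sg) * (c - s ^ j)" using upos[OF i] by (simp add: field_simps)
      finally have "(- sg / u l) * (w x \<bullet> t l) = - (sg * sg) * (c - s ^ j)" .
      then have "c + (- sg / u l) * (w x \<bullet> t l) = s ^ j" using sg by simp
      then show ?thesis unfolding rhs using True 1 le by (simp add: Eg_def on_bdry_def ib_def[symmetric])
    next
      case 2
      have g: "\<phi> (gam ia r) = A * (1 - r) + B * r + C * (1 - r)" for r
      proof -
        have L: "lam i (gam ia r) = r" "lam ia (gam ia r) = 0" "lam ib (gam ia r) = 1 - r"
          by (simp_all add: lam_gam vs lv)
        show ?thesis by (simp only: \<phi>_def \<psi>_def L) (simp add: algebra_simps)
      qed
      have "((\<lambda>r. A * (1 - r) + B * r + C * (1 - r)) has_real_derivative (- A + B - C)) (at s)"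
        by (auto intro!: derivative_eq_intros)
      moreover have "((\<lambda>r. A * (1 - r) + B * r + C * (1 - r)) has_real_derivative (w (gam ia s) \<bullet> t ia)) (at s)"
        using Dl[of ia s] by (simp add: g)
      ultimately have wt: "w x \<bullet> t l = - A + B - C"
        using s 2 DERIV_unique by blast
      have "- A + B - C = sg * c * u ia"
        unfolding A_def B_def C_def cU by (simp add: U_def algebra_simps)
      then have "(- sg / u l) * (w x \<bullet> t l) = (- sg / u ia) * (sg * c * u ia)"
        using wt 2 by simp
      also have "\<dots> = - (sg * sg) * c" using upos[OF ix(1)] by (simp add: field_simps)
      finally have "c + (- sg / u l) * (w x \<bullet> t l) = 0" using sg by simp
      then show ?thesis unfolding rhs using True 2 ix by (simp add: Eg_def on_bdry_def)
    next
      case 3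
      have g: "\<phi> (gam ib r) = B * (1 - r)" for r
      proof -
        have L: "lam i (gam ib r) = 1 - r" "lam ia (gam ib r) = r" "lam ib (gam ib r) = 0"
          by (simp_all add: lam_gam vs lv)
        show ?thesis by (simp only: \<phi>_def \<psi>_def L) (simp add: algebra_simps)
      qed
      have "((\<lambda>r. B * (1 - r)) has_real_derivative (- B)) (at s)"
        by (auto intro!: derivative_eq_intros)
      moreover have "((\<lambda>r. B * (1 - r)) has_real_derivative (w (gam ib s) \<bullet> t ib)) (at s)"
        using Dl[of ib s] by (simp add: g)
      ultimately have wt: "w x \<bullet> t l = - B"
        using s 3 DERIV_unique by blast
      have "c + (- sg / u l) * (w x \<bullet> t l) = 0"
        unfolding wt using 3 upos[OF ix(2)] sg
        by (simp add: B_def field_simps)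
      then show ?thesis unfolding rhs using True 3 ix by (simp add: Eg_def on_bdry_def)
    qed
  qed
  then have "Eg i j = bscale c Tb + Wt" by (simp add: fun_eq_iff)
  moreover have "bscale c Tb + Wt \<in> bs.span (Vtrace k a0 a1 a2 \<union> Wtrace k a0 a1 a2)"
    using TV WtW by (intro bs.span_add bs.span_base) auto
  ultimately show ?thesis by simp
qed

end

context tri begin

lemma main: "I_M k a0 a1 a2 = 0"
proof -
  let ?M = "Mspace k a0 a1 a2" and ?V = "Vtrace k a0 a1 a2" and ?W = "Wtrace k a0 a1 a2"
    and ?G = "(\<lambda>(i, j). Eg i j) ` ({..<3} \<times> {..k})"
  have fG: "finite ?G" by simp
  have GVW: "?G \<subseteq> bs.span (?V \<union> ?W)" using Eg_span by auto
  have MG: "?M \<subseteq> bs.span ?G" by (rule M_span)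
  have VWM: "?V \<union> ?W \<subseteq> ?M" using V_sub_M W_sub_M by blast
  have "?M \<subseteq> bs.span (?V \<union> ?W)"
  proof -
    have "bs.span ?G \<subseteq> bs.span (?V \<union> ?W)"
      using bs.span_mono[OF GVW] by (simp add: bs.span_span)
    with MG show ?thesis by blast
  qed
  moreover have "?V \<union> ?W \<subseteq> bs.span ?M" using VWM bs.span_superset by blast
  ultimately have sp: "bs.span ?M = bs.span (?V \<union> ?W)" using bs.span_eq by blast
  have "bs.dim ?M = bs.dim (?V \<union> ?W)" by (rule bs.span_eq_dim[OF sp])
  also have "\<dots> = bs.dim ?V + bs.dim ?W"
    by (rule bs.dim_union_direct[OF fG]) (use VWM MG inter0 in blast)+
  finally show ?thesis unfolding I_M_def bdim_eq by simp
qed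

end

theorem lemma5p2:
  fixes a0 a1 a2 :: "real^2" and k :: nat
  assumes "\<not> collinear {a0, a1, a2}"
    and "k \<ge> 1"
  shows "I_M k a0 a1 a2 = 0"
proof -
  interpret tri a0 a1 a2 by unfold_locales (rule assms(1))
  show ?thesis by (rule main)
qed

end
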